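(* Let $G$ be a connected graph in $\mathcal{C}$ and $C$ an induced $C_5$ in $G$ with vertices $0,\dots,4$ in cyclic order. Then for every $i$ (indices mod 5), there is no edge between $X_i$ and $Y_{i+1}\cup Y_{i+2}\cup Y_{i+4}$.
   Context: $\mathcal{C}=\mathrm{Free}(\text{claw}, 4K_1, \text{5-wheel}, C_5\text{-twin}, P_5\text{-twin}, K_5-e)$, where $\mathrm{Free}(L)$ is the class of graphs with no induced subgraph isomorphic to a member of $L$; the claw is $K_{1,3}$; $4K_1$ is the edgeless graph on 4 vertices; the 5-wheel is $C_5$ plus a vertex adjacent to all five cycle vertices; the $C_5$-twin is $C_5$ plus a new vertex adjacent to one cycle vertex $v$ and both cycle-neighbours of $v$; the $P_5$-twin is a path $p_1p_2p_3p_4p_5$ plus a new vertex adjacent to exactly $p_2,p_3,p_4$; $K_5-e$ is $K_5$ minus one edge. Given an induced cycle $C$ of length 5 with vertices $0,\dots,4$ in cyclic order (indices taken mod 5): $R$ is the set of vertices outside $C$ with no neighbour in $C$; $X_j$ is the set of vertices outside $C$ whose neighbourhood in $C$ is exactly $\{j,j+1\}$; $Y_j$ is the set of vertices outside $C$ whose neighbourhood in $C$ is exactly $\{j,j+1,j+2,j+3\}$; $X=\bigcup_j X_j$, $Y=\bigcup_j Y_j$. *)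

theory Defs
  imports Main
begin

text \<open>Simple graphs: finite vertex set V, symmetric irreflexive adjacency E
  (only adjacencies between vertices of V matter).\<close>
definition graph :: "'a set \<Rightarrow> ('a \<Rightarrow> 'a \<Rightarrow> bool) \<Rightarrow> bool" where
  "graph V E \<longleftrightarrow> finite V \<and> (\<forall>x y. E x y \<longrightarrow> E y x) \<and> (\<forall>x. \<not> E x x)"

definition connected_graph :: "'a set \<Rightarrow> ('a \<Rightarrow> 'a \<Rightarrow> bool) \<Rightarrow> bool" where
  "connected_graph V E \<longleftrightarrow>
     (\<forall>u\<in>V. \<forall>v\<in>V. (\<lambda>x y. x \<in> V \<and> y \<in> V \<and> E x y)\<^sup>*\<^sup>* u v)"

text \<open>Small pattern graphs on vertex set {0..<n}, given by an edge list.\<close>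
definition edges_of :: "(nat \<times> nat) list \<Rightarrow> nat \<Rightarrow> nat \<Rightarrow> bool" where
  "edges_of L i j \<longleftrightarrow> (i, j) \<in> set L \<or> (j, i) \<in> set L"

definition has_induced :: "nat \<Rightarrow> (nat \<Rightarrow> nat \<Rightarrow> bool) \<Rightarrow> 'a set \<Rightarrow> ('a \<Rightarrow> 'a \<Rightarrow> bool) \<Rightarrow> bool" where
  "has_induced n H V E \<longleftrightarrow>
     (\<exists>f. inj_on f {..<n} \<and> f ` {..<n} \<subseteq> V \<and>
          (\<forall>i<n. \<forall>j<n. E (f i) (f j) \<longleftrightarrow> H i j))"

definition claw :: "nat \<Rightarrow> nat \<Rightarrow> bool" where
  "claw = edges_of [(0,1),(0,2),(0,3)]"

definition fourK1 :: "nat \<Rightarrow> nat \<Rightarrow> bool" where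
  "fourK1 = edges_of []"                  (* 4 vertices *)

definition C5_edges :: "(nat \<times> nat) list" where
  "C5_edges = [(0,1),(1,2),(2,3),(3,4),(4,0)]"

definition wheel5 :: "nat \<Rightarrow> nat \<Rightarrow> bool" where
  "wheel5 = edges_of (C5_edges @ [(5,0),(5,1),(5,2),(5,3),(5,4)])"

definition C5_twin :: "nat \<Rightarrow> nat \<Rightarrow> bool" where
  "C5_twin = edges_of (C5_edges @ [(5,4),(5,0),(5,1)])"

definition P5_twin :: "nat \<Rightarrow> nat \<Rightarrow> bool" where
  "P5_twin = edges_of [(0,1),(1,2),(2,3),(3,4),(5,1),(5,2),(5,3)]"

definition K5_minus_e :: "nat \<Rightarrow> nat \<Rightarrow> bool" where
  "K5_minus_e = edges_of [(0,2),(0,3),(0,4),(1,2),(1,3),(1,4),(2,3),(2,4),(3,4)]"  (* 5 vertices, missing 01 *)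

definition in_class_C :: "'a set \<Rightarrow> ('a \<Rightarrow> 'a \<Rightarrow> bool) \<Rightarrow> bool" where
  "in_class_C V E \<longleftrightarrow> graph V E \<and>
     \<not> has_induced 4 claw V E \<and> \<not> has_induced 4 fourK1 V E \<and>
     \<not> has_induced 6 wheel5 V E \<and> \<not> has_induced 6 C5_twin V E \<and>
     \<not> has_induced 6 P5_twin V E \<and> \<not> has_induced 5 K5_minus_e V E"

definition induced_C5 :: "'a set \<Rightarrow> ('a \<Rightarrow> 'a \<Rightarrow> bool) \<Rightarrow> (nat \<Rightarrow> 'a) \<Rightarrow> bool" where
  "induced_C5 V E c \<longleftrightarrow> inj_on c {..<5} \<and> c ` {..<5} \<subseteq> V \<and>
     (\<forall>i<5. \<forall>j<5. E (c i) (c j) \<longleftrightarrow> (j = (i + 1) mod 5 \<or> i = (j + 1) mod 5))"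

definition nbrs_on_C :: "('a \<Rightarrow> 'a \<Rightarrow> bool) \<Rightarrow> (nat \<Rightarrow> 'a) \<Rightarrow> 'a \<Rightarrow> nat set" where
  "nbrs_on_C E c v = {k. k < 5 \<and> E v (c k)}"

definition Xset :: "'a set \<Rightarrow> ('a \<Rightarrow> 'a \<Rightarrow> bool) \<Rightarrow> (nat \<Rightarrow> 'a) \<Rightarrow> nat \<Rightarrow> 'a set" where
  "Xset V E c j = {v \<in> V - c ` {..<5}. nbrs_on_C E c v = {j mod 5, (j + 1) mod 5}}"

definition Yset :: "'a set \<Rightarrow> ('a \<Rightarrow> 'a \<Rightarrow> bool) \<Rightarrow> (nat \<Rightarrow> 'a) \<Rightarrow> nat \<Rightarrow> 'a set" where
  "Yset V E c j = {v \<in> V - c ` {..<5}.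
     nbrs_on_C E c v = {j mod 5, (j + 1) mod 5, (j + 2) mod 5, (j + 3) mod 5}}"

end

theory Submission
  imports Defs
begin

lemma claw_lemma:
  assumes g: "graph V E" and V: "y \<in> V" "x \<in> V" "p \<in> V" "q \<in> V"
    and e: "E y x" "E y p" "E y q" "\<not> E x p" "\<not> E x q" "\<not> E p q"
    and dd: "x \<noteq> p" "x \<noteq> q" "p \<noteq> q"
  shows "has_induced 4 claw V E"
proof -
  have sym: "\<And>u v. E u v \<Longrightarrow> E v u" and irr: "\<And>u. \<not> E u u" using g unfolding graph_def by blast+
  have e2: "E x y" "E p y" "E q y" "\<not> E p x" "\<not> E q x" "\<not> E q p"
    using e sym by blast+
  have d: "y \<noteq> x" "y \<noteq> p" "y \<noteq> q"
    using e(1-3) irr by fastforce+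
  define f where "f = (\<lambda>n::nat. if n = 0 then y else if n = 1 then x else if n = 2 then p else q)"
  have inj: "inj_on f {..<4}"
  proof (rule inj_onI)
    fix i j :: nat assume "i \<in> {..<4}" "j \<in> {..<4}" "f i = f j"
    then have "i \<in> {0,1,2,3}" "j \<in> {0,1,2,3}" "f i = f j" by auto
    then show "i = j" unfolding f_def using d dd
      by (elim insertE emptyE; simp)
  qed
  have im: "f ` {..<4} \<subseteq> V" unfolding f_def using V by auto
  have ed: "\<forall>i<4. \<forall>j<4. E (f i) (f j) \<longleftrightarrow> claw i j"
  proof (intro allI impI)
    fix i j :: nat assume "i < 4" "j < 4"
    then have "i \<in> {0,1,2,3}" "j \<in> {0,1,2,3}" by auto
    then show "E (f i) (f j) \<longleftrightarrow> claw i j"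
      unfolding f_def claw_def edges_of_def
      by (elim insertE emptyE; simp add: e e2 irr)
  qed
  show ?thesis unfolding has_induced_def using inj im ed by blast
qed

lemma mods:
  fixes i :: nat
  shows "(i+2) mod 5 \<notin> {i mod 5,(i+1) mod 5} \<and> (i+4) mod 5 \<notin> {i mod 5,(i+1) mod 5}
   \<and> (i+2) mod 5 \<noteq> (i+4) mod 5
   \<and> (i+2) mod 5 \<noteq> ((i+4) mod 5 + 1) mod 5 \<and> (i+4) mod 5 \<noteq> ((i+2) mod 5 + 1) mod 5
   \<and> (\<forall>j \<in> {i+1,i+2,i+4}. (i+2) mod 5 \<in> {j mod 5, (j+1) mod 5, (j+2) mod 5, (j+3) mod 5}
        \<and> (i+4) mod 5 \<in> {j mod 5, (j+1) mod 5, (j+2) mod 5, (j+3) mod 5})"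
proof -
  obtain q r where i: "i = r + 5*q" and r: "r < 5" by (metis mod_less_divisor mod_mult_div_eq add.commute mult.commute zero_less_numeral)
  from r have "r \<in> {0,1,2,3,4}" by auto
  thus ?thesis unfolding i by (elim insertE; simp add: algebra_simps mod_Suc)
qed

theorem claim8:
  fixes V :: "'a set" and E :: "'a \<Rightarrow> 'a \<Rightarrow> bool" and c :: "nat \<Rightarrow> 'a"
  assumes "in_class_C V E" and "connected_graph V E" and "induced_C5 V E c"
  shows "\<forall>i. \<forall>x \<in> Xset V E c i.
           \<forall>y \<in> Yset V E c (i + 1) \<union> Yset V E c (i + 2) \<union> Yset V E c (i + 4).
             \<not> E x y"
proof (intro allI ballI notI)
  fix i x y
  assume x: "x \<in> Xset V E c i"
    and y: "y \<in> Yset V E c (i + 1) \<union> Yset V E c (i + 2) \<union> Yset V E c (i + 4)"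
    and exy: "E x y"
  have g: "graph V E" and nc: "\<not> has_induced 4 claw V E" using assms(1) unfolding in_class_C_def by auto
  have sym: "\<And>u v. E u v \<Longrightarrow> E v u" using g unfolding graph_def by blast
  have C: "\<And>k l. k < 5 \<Longrightarrow> l < 5 \<Longrightarrow> E (c k) (c l) \<longleftrightarrow> (l = (k + 1) mod 5 \<or> k = (l + 1) mod 5)"
    and cV: "\<And>k. k < 5 \<Longrightarrow> c k \<in> V"
    using assms(3) unfolding induced_C5_def by auto
  define a where "a = (i + 2) mod 5"
  define b where "b = (i + 4) mod 5"
  have ab: "a < 5" "b < 5" unfolding a_def b_def by auto
  have xV: "x \<in> V" and xn: "nbrs_on_C E c x = {i mod 5, (i + 1) mod 5}" using x unfolding Xset_def by auto
  note M = mods[of i]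
  have "a \<notin> nbrs_on_C E c x" "b \<notin> nbrs_on_C E c x" unfolding xn a_def b_def using M by blast+
  hence xa: "\<not> E x (c a)" and xb: "\<not> E x (c b)" using ab unfolding nbrs_on_C_def by auto
  have yV: "y \<in> V" using y unfolding Yset_def by auto
  have "a \<in> nbrs_on_C E c y \<and> b \<in> nbrs_on_C E c y"
  proof -
    obtain j where j: "j \<in> {i+1,i+2,i+4}" and yj: "y \<in> Yset V E c j" using y by blast
    have "nbrs_on_C E c y = {j mod 5, (j + 1) mod 5, (j + 2) mod 5, (j + 3) mod 5}"
      using yj unfolding Yset_def by blast
    moreover have "a \<in> {j mod 5, (j + 1) mod 5, (j + 2) mod 5, (j + 3) mod 5}"
       "b \<in> {j mod 5, (j + 1) mod 5, (j + 2) mod 5, (j + 3) mod 5}"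
      using M j unfolding a_def b_def by blast+
    ultimately show ?thesis by simp
  qed
  hence ya: "E y (c a)" and yb: "E y (c b)" unfolding nbrs_on_C_def by auto
  have nab: "\<not> E (c a) (c b)" using C[OF ab] M unfolding a_def b_def by blast
  have xc: "x \<notin> c ` {..<5}" using x unfolding Xset_def by auto
  have pq: "a \<noteq> b" unfolding a_def b_def using M by blast
  have d1: "x \<noteq> c a" "x \<noteq> c b" using xc ab by auto
  have d2: "c a \<noteq> c b" using pq ab assms(3) unfolding induced_C5_def inj_on_def by auto
  have "has_induced 4 claw V E"
    by (rule claw_lemma[OF g yV xV cV[OF ab(1)] cV[OF ab(2)] sym[OF exy] ya yb xa xb nab d1 d2])
  with nc show False by blast
qed

end
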